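(* If $\varphi\in\mathrm{maxHML}$ (resp. $\varphi\in\mathrm{minHML}$) is closed, then there is some $\psi\in\mathrm{sHML}$ (resp. $\psi\in\mathrm{cHML}$) such that $[\![\psi]\!]_L=[\![\varphi]\!]_L$.
   Context: Fix a finite set $\mathrm{Act}$ of actions. recHML formulae: $\varphi::=\mathrm{tt}\mid\mathrm{ff}\mid\varphi\vee\varphi\mid\varphi\wedge\varphi\mid\langle A\rangle\varphi\mid[A]\varphi\mid\min X.\varphi\mid\max X.\varphi\mid X$ ($A\subseteq\mathrm{Act}$), guarded. Fragments: $\mathrm{maxHML}$: $\varphi::=\mathrm{tt}\mid\mathrm{ff}\mid[A]\varphi\mid\langle A\rangle\varphi\mid\varphi\vee\varphi\mid\varphi\wedge\varphi\mid\max X.\varphi\mid X$; $\mathrm{minHML}$: $\varphi::=\mathrm{tt}\mid\mathrm{ff}\mid[A]\varphi\mid\langle A\rangle\varphi\mid\varphi\vee\varphi\mid\varphi\wedge\varphi\mid\min X.\varphi\mid X$; $\mathrm{sHML}$: $\varphi::=\mathrm{tt}\mid\mathrm{ff}\mid[A]\varphi\mid\varphi\wedge\varphi\mid\max X.\varphi\mid X$; $\mathrm{cHML}$: $\varphi::=\mathrm{tt}\mid\mathrm{ff}\mid\langle A\rangle\varphi\mid\varphi\vee\varphi\mid\min X.\varphi\mid X$. Linear-time semantics over infinite traces $\mathrm{Trc}=\mathrm{Act}^\omega$: $[\![\mathrm{tt}]\!]_L=\mathrm{Trc}$, $[\![\mathrm{ff}]\!]_L=\emptyset$, $\vee,\wedge$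 union/intersection, $[\![\langle A\rangle\varphi,\sigma]\!]_L=\{at\mid a\in A,t\in[\![\varphi,\sigma]\!]_L\}$, $[\![[A]\varphi,\sigma]\!]_L=\{t\mid\forall a\in A,\forall t'.\ t=at'\Rightarrow t'\in[\![\varphi,\sigma]\!]_L\}$, $[\![\min X.\varphi,\sigma]\!]_L=\bigcap\{S\mid[\![\varphi,\sigma[X\mapsto S]]\!]_L\subseteq S\}$, $[\![\max X.\varphi,\sigma]\!]_L=\bigcup\{S\mid S\subseteq[\![\varphi,\sigma[X\mapsto S]]\!]_L\}$, $[\![X,\sigma]\!]_L=\sigma(X)$. *)

theory Defs
  imports Main "HOL-Library.Stream"
begin

text \<open>recHML formulae over actions of type 'a (a finite type = the finite set Act);
  recursion variables are natural numbers.\<close>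

datatype 'a hml =
    TT | FF
  | Or "'a hml" "'a hml"
  | And "'a hml" "'a hml"
  | Dia "'a set" "'a hml"
  | Box "'a set" "'a hml"
  | Min nat "'a hml"
  | Max nat "'a hml"
  | Var nat

fun fv :: "'a hml \<Rightarrow> nat set" where
  "fv TT = {}" | "fv FF = {}"
| "fv (Or p q) = fv p \<union> fv q" | "fv (And p q) = fv p \<union> fv q"
| "fv (Dia A p) = fv p" | "fv (Box A p) = fv p"
| "fv (Min X p) = fv p - {X}" | "fv (Max X p) = fv p - {X}"
| "fv (Var X) = {X}"

definition closed :: "'a hml \<Rightarrow> bool" where
  "closed p \<longleftrightarrow> fv p = {}"

fun ufv :: "'a hml \<Rightarrow> nat set" where
  "ufv TT = {}" | "ufv FF = {}"
| "ufv (Or p q) = ufv p \<union> ufv q" | "ufv (And p q) = ufv p \<union> ufv q"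
| "ufv (Dia A p) = {}" | "ufv (Box A p) = {}"
| "ufv (Min X p) = ufv p - {X}" | "ufv (Max X p) = ufv p - {X}"
| "ufv (Var X) = {X}"

fun guarded :: "'a hml \<Rightarrow> bool" where
  "guarded TT = True" | "guarded FF = True"
| "guarded (Or p q) = (guarded p \<and> guarded q)" | "guarded (And p q) = (guarded p \<and> guarded q)"
| "guarded (Dia A p) = guarded p" | "guarded (Box A p) = guarded p"
| "guarded (Min X p) = (guarded p \<and> X \<notin> ufv p)"
| "guarded (Max X p) = (guarded p \<and> X \<notin> ufv p)"
| "guarded (Var X) = True"

fun maxHML :: "'a hml \<Rightarrow> bool" where
  "maxHML TT = True" | "maxHML FF = True"
| "maxHML (Or p q) = (maxHML p \<and> maxHML q)" | "maxHML (And p q) = (maxHML p \<and> maxHML q)"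
| "maxHML (Dia A p) = maxHML p" | "maxHML (Box A p) = maxHML p"
| "maxHML (Min X p) = False" | "maxHML (Max X p) = maxHML p"
| "maxHML (Var X) = True"

fun minHML :: "'a hml \<Rightarrow> bool" where
  "minHML TT = True" | "minHML FF = True"
| "minHML (Or p q) = (minHML p \<and> minHML q)" | "minHML (And p q) = (minHML p \<and> minHML q)"
| "minHML (Dia A p) = minHML p" | "minHML (Box A p) = minHML p"
| "minHML (Min X p) = minHML p" | "minHML (Max X p) = False"
| "minHML (Var X) = True"

fun sHML :: "'a hml \<Rightarrow> bool" where
  "sHML TT = True" | "sHML FF = True"
| "sHML (Or p q) = False" | "sHML (And p q) = (sHML p \<and> sHML q)"
| "sHML (Dia A p) = False" | "sHML (Box A p) = sHML p"
| "sHML (Min X p) = False" | "sHML (Max X p) = sHML p"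
| "sHML (Var X) = True"

fun cHML :: "'a hml \<Rightarrow> bool" where
  "cHML TT = True" | "cHML FF = True"
| "cHML (Or p q) = (cHML p \<and> cHML q)" | "cHML (And p q) = False"
| "cHML (Dia A p) = cHML p" | "cHML (Box A p) = False"
| "cHML (Min X p) = cHML p" | "cHML (Max X p) = False"
| "cHML (Var X) = True"

fun semL :: "'a hml \<Rightarrow> (nat \<Rightarrow> 'a stream set) \<Rightarrow> 'a stream set" where
  "semL TT \<sigma> = UNIV"
| "semL FF \<sigma> = {}"
| "semL (Or p q) \<sigma> = semL p \<sigma> \<union> semL q \<sigma>"
| "semL (And p q) \<sigma> = semL p \<sigma> \<inter> semL q \<sigma>"
| "semL (Dia A p) \<sigma> = {a ## t | a t. a \<in> A \<and> t \<in> semL p \<sigma>}"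
| "semL (Box A p) \<sigma> = {t. \<forall>a\<in>A. \<forall>t'. t = a ## t' \<longrightarrow> t' \<in> semL p \<sigma>}"
| "semL (Min X p) \<sigma> = \<Inter>{S. semL p (\<sigma>(X := S)) \<subseteq> S}"
| "semL (Max X p) \<sigma> = \<Union>{S. S \<subseteq> semL p (\<sigma>(X := S))}"
| "semL (Var X) \<sigma> = \<sigma> X"

text \<open>Semantics of closed formulae (the environment is irrelevant; we use the empty one).\<close>
definition semC :: "'a hml \<Rightarrow> 'a stream set" where
  "semC p = semL p (\<lambda>_. {})"

end

theory Submission
  imports Defs
begin

lemma semL_Dia: "semL (Dia A p) \<sigma> = {t. shd t \<in> A \<and> stl t \<in> semL p \<sigma>}"
  apply auto by (metis stream.collapse)
lemma semL_Box: "semL (Box A p) \<sigma> = {t. shd t \<in> A \<longrightarrow> stl t \<in> semL p \<sigma>}"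
  by auto
declare semL.simps(5,6)[simp del]
declare semL_Dia[simp] semL_Box[simp]

lemma semL_env: "(\<forall>X\<in>fv p. \<sigma> X = \<sigma>' X) \<Longrightarrow> semL p \<sigma> = semL p \<sigma>'"
proof (induction p arbitrary: \<sigma> \<sigma>')
  case (Min X p)
  have "\<And>S. semL p (\<sigma>(X:=S)) = semL p (\<sigma>'(X:=S))" using Min.prems by (intro Min.IH) auto
  then show ?case by simp
next
  case (Max X p)
  have "\<And>S. semL p (\<sigma>(X:=S)) = semL p (\<sigma>'(X:=S))" using Max.prems by (intro Max.IH) auto
  then show ?case by simp
next
  case (Or p q)
  have "semL p \<sigma> = semL p \<sigma>'" "semL q \<sigma> = semL q \<sigma>'" using Or.prems by (intro Or.IH; auto)+
  then show ?case by simp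
next
  case (And p q)
  have "semL p \<sigma> = semL p \<sigma>'" "semL q \<sigma> = semL q \<sigma>'" using And.prems by (intro And.IH; auto)+
  then show ?case by simp
next
  case (Dia A p)
  have "semL p \<sigma> = semL p \<sigma>'" using Dia.prems by (intro Dia.IH; auto)
  then show ?case by simp
next
  case (Box A p)
  have "semL p \<sigma> = semL p \<sigma>'" using Box.prems by (intro Box.IH; auto)
  then show ?case by simp
qed auto

lemma semL_mono: "(\<And>X. \<sigma> X \<subseteq> \<sigma>' X) \<Longrightarrow> semL p \<sigma> \<subseteq> semL p \<sigma>'"
proof (induction p arbitrary: \<sigma> \<sigma>')
  case (Min X p)
  have h: "\<And>S. semL p (\<sigma>(X:=S)) \<subseteq> semL p (\<sigma>'(X:=S))" using Min.prems by (intro Min.IH) auto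
  have "{S. semL p (\<sigma>'(X:=S)) \<subseteq> S} \<subseteq> {S. semL p (\<sigma>(X:=S)) \<subseteq> S}"
    using h by (blast intro: subset_trans)
  then show ?case by (simp only: semL.simps) (rule Inter_anti_mono)
next
  case (Max X p)
  have h: "\<And>S. semL p (\<sigma>(X:=S)) \<subseteq> semL p (\<sigma>'(X:=S))" using Max.prems by (intro Max.IH) auto
  have "{S. S \<subseteq> semL p (\<sigma>(X:=S))} \<subseteq> {S. S \<subseteq> semL p (\<sigma>'(X:=S))}"
    using h by (blast intro: subset_trans)
  then show ?case by (simp only: semL.simps) (rule Union_mono)
next
  case (Or p q)
  have "semL p \<sigma> \<subseteq> semL p \<sigma>'" "semL q \<sigma> \<subseteq> semL q \<sigma>'" using Or.prems by (intro Or.IH; auto)+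
  then show ?case by auto
next
  case (And p q)
  have "semL p \<sigma> \<subseteq> semL p \<sigma>'" "semL q \<sigma> \<subseteq> semL q \<sigma>'" using And.prems by (intro And.IH; auto)+
  then show ?case by auto
next
  case (Dia A p)
  have "semL p \<sigma> \<subseteq> semL p \<sigma>'" using Dia.prems by (intro Dia.IH; auto)
  then show ?case by auto
next
  case (Box A p)
  have "semL p \<sigma> \<subseteq> semL p \<sigma>'" using Box.prems by (intro Box.IH; auto)
  then show ?case by auto
qed auto

lemma semL_Max_gfp: "semL (Max X p) \<sigma> = gfp (\<lambda>S. semL p (\<sigma>(X:=S)))"
  by (simp add: gfp_def)

lemma semL_Max_unfold: "semL (Max X p) \<sigma> = semL p (\<sigma>(X := semL (Max X p) \<sigma>))"
proof -
  have "mono (\<lambda>S. semL p (\<sigma>(X:=S)))" by (rule monoI, rule semL_mono) auto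
  then show ?thesis unfolding semL_Max_gfp by (rule gfp_unfold)
qed

fun dual :: "'a hml \<Rightarrow> 'a hml" where
  "dual TT = FF" | "dual FF = TT"
| "dual (Or p q) = And (dual p) (dual q)" | "dual (And p q) = Or (dual p) (dual q)"
| "dual (Dia A p) = Box A (dual p)" | "dual (Box A p) = Dia A (dual p)"
| "dual (Min X p) = Max X (dual p)" | "dual (Max X p) = Min X (dual p)"
| "dual (Var X) = Var X"

lemma dual_props: "fv (dual p) = fv p" "ufv (dual p) = ufv p" "guarded (dual p) = guarded p"
  "maxHML (dual p) = minHML p" "cHML (dual p) = sHML p"
  by (induction p) auto

lemma semL_dual: "semL (dual p) (\<lambda>X. - \<sigma> X) = - semL p \<sigma>"
proof (induction p arbitrary: \<sigma>)
  case (Min X p)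
  have e: "\<And>S. (\<lambda>Y. - \<sigma> Y)(X := S) = (\<lambda>Y. - (\<sigma>(X := - S)) Y)" by (rule ext) auto
  have "semL (dual (Min X p)) (\<lambda>Y. - \<sigma> Y) = \<Union>{S. S \<subseteq> - semL p (\<sigma>(X := - S))}"
    by (simp only: dual.simps semL.simps e Min.IH)
  also have "\<dots> = - \<Inter>{S. semL p (\<sigma>(X := S)) \<subseteq> S}"
  proof (intro equalityI subsetI)
    fix x assume "x \<in> \<Union>{S. S \<subseteq> - semL p (\<sigma>(X := - S))}"
    then obtain S where xS: "x \<in> S" and S: "S \<subseteq> - semL p (\<sigma>(X := - S))" by auto
    from S have "- S \<in> {S. semL p (\<sigma>(X := S)) \<subseteq> S}" by auto
    then show "x \<in> - \<Inter>{S. semL p (\<sigma>(X := S)) \<subseteq> S}" using xS by blast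
  next
    fix x assume "x \<in> - \<Inter>{S. semL p (\<sigma>(X := S)) \<subseteq> S}"
    then obtain T where "x \<notin> T" "semL p (\<sigma>(X := T)) \<subseteq> T" by auto
    then show "x \<in> \<Union>{S. S \<subseteq> - semL p (\<sigma>(X := - S))}"
      by (intro UnionI[of "- T"]) auto
  qed
  finally show ?case by simp
next
  case (Max X p)
  have e: "\<And>S. (\<lambda>Y. - \<sigma> Y)(X := S) = (\<lambda>Y. - (\<sigma>(X := - S)) Y)" by (rule ext) auto
  have "semL (dual (Max X p)) (\<lambda>Y. - \<sigma> Y) = \<Inter>{S. - semL p (\<sigma>(X := - S)) \<subseteq> S}"
    by (simp only: dual.simps semL.simps e Max.IH)
  also have "\<dots> = - \<Union>{S. S \<subseteq> semL p (\<sigma>(X := S))}"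
  proof (intro equalityI subsetI)
    fix x assume x: "x \<in> \<Inter>{S. - semL p (\<sigma>(X := - S)) \<subseteq> S}"
    show "x \<in> - \<Union>{S. S \<subseteq> semL p (\<sigma>(X := S))}"
    proof
      assume "x \<in> \<Union>{S. S \<subseteq> semL p (\<sigma>(X := S))}"
      then obtain T where "x \<in> T" "T \<subseteq> semL p (\<sigma>(X := T))" by auto
      moreover have "- semL p (\<sigma>(X := - (- T))) \<subseteq> - T" using calculation by auto
      ultimately show False using x by blast
    qed
  next
    fix x assume x: "x \<in> - \<Union>{S. S \<subseteq> semL p (\<sigma>(X := S))}"
    show "x \<in> \<Inter>{S. - semL p (\<sigma>(X := - S)) \<subseteq> S}"
    proof
      fix S assume "S \<in> {S. - semL p (\<sigma>(X := - S)) \<subseteq> S}"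
      then have "- S \<subseteq> semL p (\<sigma>(X := - S))" by auto
      then show "x \<in> S" using x by auto
    qed
  qed
  finally show ?case by simp
next
  case (Dia A p) then show ?case by auto
next
  case (Box A p) then show ?case by auto
qed auto

definition cl :: "'a stream set \<Rightarrow> 'a stream set" where
  "cl S = {t. \<forall>n. \<exists>u\<in>S. stake n u = stake n t}"
definition closedS :: "'a stream set \<Rightarrow> bool" where
  "closedS S \<longleftrightarrow> cl S \<subseteq> S"

lemma cl_mono: "S \<subseteq> T \<Longrightarrow> cl S \<subseteq> cl T" unfolding cl_def by blast

lemma stake_le: "stake m u = stake m t \<Longrightarrow> n \<le> m \<Longrightarrow> stake n u = stake n t"
  by (metis min.absorb1 take_stake)

lemma closed_Un: assumes "closedS S" "closedS T" shows "closedS (S \<union> T)"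
  unfolding closedS_def
proof
  fix t assume t: "t \<in> cl (S \<union> T)"
  show "t \<in> S \<union> T"
  proof (rule ccontr)
    assume nt: "t \<notin> S \<union> T"
    then have "t \<notin> cl S" "t \<notin> cl T" using assms unfolding closedS_def by auto
    then obtain n1 n2 where n1: "\<forall>u\<in>S. stake n1 u \<noteq> stake n1 t" and n2: "\<forall>u\<in>T. stake n2 u \<noteq> stake n2 t"
      unfolding cl_def by auto
    obtain u where "u \<in> S \<union> T" "stake (max n1 n2) u = stake (max n1 n2) t" using t unfolding cl_def by blast
    then show False using n1 n2 stake_le[of "max n1 n2" u t] by fastforce
  qed
qed

lemma closed_Int: "closedS S \<Longrightarrow> closedS T \<Longrightarrow> closedS (S \<inter> T)"
  unfolding closedS_def cl_def by blast

lemma closed_Dia: assumes "closedS P" shows "closedS {t. shd t \<in> A \<and> stl t \<in> P}"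
  unfolding closedS_def
proof
  fix t assume t: "t \<in> cl {t. shd t \<in> A \<and> stl t \<in> P}"
  from t obtain u where "shd u \<in> A" "stake 1 u = stake 1 t" unfolding cl_def by blast
  then have "shd t \<in> A" by simp
  moreover have "stl t \<in> cl P" unfolding cl_def
  proof
    show "\<forall>n. \<exists>u\<in>P. stake n u = stake n (stl t)"
    proof
      fix n obtain u where "u \<in> {t. shd t \<in> A \<and> stl t \<in> P}" "stake (Suc n) u = stake (Suc n) t"
        using t unfolding cl_def by blast
      then show "\<exists>u\<in>P. stake n u = stake n (stl t)" by (intro bexI[of _ "stl u"]) auto
    qed
  qed
  ultimately show "t \<in> {t. shd t \<in> A \<and> stl t \<in> P}" using assms unfolding closedS_def by auto
qed

lemma closed_Box: assumes "closedS P" shows "closedS {t. shd t \<in> A \<longrightarrow> stl t \<in> P}"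
  unfolding closedS_def
proof
  fix t assume t: "t \<in> cl {t. shd t \<in> A \<longrightarrow> stl t \<in> P}"
  show "t \<in> {t. shd t \<in> A \<longrightarrow> stl t \<in> P}"
  proof (intro CollectI impI)
    assume a: "shd t \<in> A"
    have "stl t \<in> cl P" unfolding cl_def
    proof
      show "\<forall>n. \<exists>u\<in>P. stake n u = stake n (stl t)"
      proof
        fix n obtain u where "u \<in> {t. shd t \<in> A \<longrightarrow> stl t \<in> P}" "stake (Suc n) u = stake (Suc n) t"
          using t unfolding cl_def by blast
        then show "\<exists>u\<in>P. stake n u = stake n (stl t)" using a by (intro bexI[of _ "stl u"]) auto
      qed
    qed
    then show "stl t \<in> P" using assms unfolding closedS_def by auto
  qed
qed

lemma maxHML_closed: "maxHML p \<Longrightarrow> (\<And>X. closedS (\<sigma> X)) \<Longrightarrow> closedS (semL p \<sigma>)"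
proof (induction p arbitrary: \<sigma>)
  case TT then show ?case by (simp add: closedS_def)
next
  case FF then show ?case by (simp add: closedS_def cl_def)
next
  case (Or p q) then show ?case by (simp add: closed_Un)
next
  case (And p q) then show ?case by (simp add: closed_Int)
next
  case (Dia A p) then show ?case by (simp add: closed_Dia)
next
  case (Box A p) then show ?case by (simp add: closed_Box)
next
  case (Var X) then show ?case by simp
next
  case (Min X p) then show ?case by simp
next
  case (Max X p)
  define M where "M = semL (Max X p) \<sigma>"
  define f where "f = (\<lambda>S. semL p (\<sigma>(X:=S)))"
  have M: "M = f M" unfolding M_def f_def by (rule semL_Max_unfold)
  have cM: "closedS (cl M)" unfolding closedS_def cl_def
  proof
    fix t assume t: "t \<in> {t. \<forall>n. \<exists>u\<in>{t. \<forall>n. \<exists>u\<in>M. stake n u = stake n t}. stake n u = stake n t}"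
    show "t \<in> {t. \<forall>n. \<exists>u\<in>M. stake n u = stake n t}"
    proof (intro CollectI allI)
      fix n from t obtain u where "\<forall>n. \<exists>v\<in>M. stake n v = stake n u" "stake n u = stake n t" by blast
      then show "\<exists>u\<in>M. stake n u = stake n t" by metis
    qed
  qed
  have fc: "closedS (f (cl M))" unfolding f_def using Max cM by (intro Max.IH) auto
  have "M \<subseteq> cl M" unfolding cl_def by blast
  then have "f M \<subseteq> f (cl M)" unfolding f_def by (intro semL_mono) auto
  then have "cl M \<subseteq> f (cl M)" using M fc cl_mono unfolding closedS_def by (metis subset_trans)
  then have "cl M \<subseteq> M" unfolding M_def f_def by auto
  then show ?case unfolding M_def closedS_def .
qed


definition res :: "'a \<Rightarrow> 'a stream set \<Rightarrow> 'a stream set" where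
  "res a S = {t. a ## t \<in> S}"

inductive_set lat :: "'a stream set set \<Rightarrow> 'a stream set set" for G where
  base: "S \<in> G \<Longrightarrow> S \<in> lat G"
| univ: "UNIV \<in> lat G"
| empty: "{} \<in> lat G"
| un: "S \<in> lat G \<Longrightarrow> T \<in> lat G \<Longrightarrow> S \<union> T \<in> lat G"
| int: "S \<in> lat G \<Longrightarrow> T \<in> lat G \<Longrightarrow> S \<inter> T \<in> lat G"

lemma lat_mono': "S \<in> lat G \<Longrightarrow> G \<subseteq> G' \<Longrightarrow> S \<in> lat G'"
  by (induction S rule: lat.induct) (auto intro: lat.intros)

lemma lat_repr: "S \<in> lat G \<Longrightarrow> \<exists>C \<in> Pow (Pow G). S = \<Union>(Inter ` C)"
proof (induction S rule: lat.induct)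
  case (base S) then show ?case by (intro bexI[of _ "{{S}}"]) auto
next
  case univ then show ?case by (intro bexI[of _ "{{}}"]) auto
next
  case empty then show ?case by (intro bexI[of _ "{}"]) auto
next
  case (un S T)
  then obtain C D where "C \<in> Pow (Pow G)" "S = \<Union>(Inter ` C)" "D \<in> Pow (Pow G)" "T = \<Union>(Inter ` D)" by blast
  then show ?case by (intro bexI[of _ "C \<union> D"]) auto
next
  case (int S T)
  then obtain C D where C: "C \<in> Pow (Pow G)" "S = \<Union>(Inter ` C)" and D: "D \<in> Pow (Pow G)" "T = \<Union>(Inter ` D)" by blast
  let ?E = "{c \<union> d | c d. c \<in> C \<and> d \<in> D}"
  have "S \<inter> T = \<Union>(Inter ` ?E)"
  proof (intro equalityI subsetI)
    fix x assume "x \<in> S \<inter> T"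
    then obtain c d where "c \<in> C" "d \<in> D" "x \<in> \<Inter>c" "x \<in> \<Inter>d" using C D by auto
    then show "x \<in> \<Union>(Inter ` ?E)" by blast
  next
    fix x assume "x \<in> \<Union>(Inter ` ?E)"
    then obtain c d where "c \<in> C" "d \<in> D" "x \<in> \<Inter>(c \<union> d)" by blast
    then show "x \<in> S \<inter> T" using C D by auto
  qed
  moreover have "?E \<in> Pow (Pow G)" using C D by auto
  ultimately show ?case by blast
qed

lemma finite_lat: "finite G \<Longrightarrow> finite (lat G)"
proof -
  assume "finite G"
  have "lat G \<subseteq> (\<lambda>C. \<Union>(Inter ` C)) ` Pow (Pow G)" 
  proof
    fix S assume "S \<in> lat G"
    then obtain C where C: "C \<in> Pow (Pow G)" "S = \<Union>(Inter ` C)" using lat_repr by blast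
    show "S \<in> (\<lambda>C. \<Union>(Inter ` C)) ` Pow (Pow G)" unfolding C(2) using C(1) by (rule imageI)
  qed
  moreover have "finite ((\<lambda>C. \<Union>(Inter ` C)) ` Pow (Pow G))" using \<open>finite G\<close> by simp
  ultimately show ?thesis by (rule finite_subset)
qed

lemma lat_res: "S \<in> lat G \<Longrightarrow> (\<And>S a. S \<in> G \<Longrightarrow> res a S \<in> lat G) \<Longrightarrow> res a S \<in> lat G"
proof (induction S rule: lat.induct)
  case univ then show ?case by (simp add: res_def lat.univ)
next
  case empty then show ?case by (simp add: res_def lat.empty)
next
  case (un S T)
  have "res a (S \<union> T) = res a S \<union> res a T" by (auto simp: res_def)
  then show ?case using un by (simp add: lat.un)
next
  case (int S T)
  have "res a (S \<inter> T) = res a S \<inter> res a T" by (auto simp: res_def)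
  then show ?case using int by (simp add: lat.int)
qed auto

fun fam :: "'a hml \<Rightarrow> (nat \<Rightarrow> 'a stream set) \<Rightarrow> 'a stream set set" where
  "fam TT \<rho> = {UNIV}" | "fam FF \<rho> = {{}}"
| "fam (Or p q) \<rho> = insert (semL (Or p q) \<rho>) (fam p \<rho> \<union> fam q \<rho>)"
| "fam (And p q) \<rho> = insert (semL (And p q) \<rho>) (fam p \<rho> \<union> fam q \<rho>)"
| "fam (Dia A p) \<rho> = insert (semL (Dia A p) \<rho>) (fam p \<rho>)"
| "fam (Box A p) \<rho> = insert (semL (Box A p) \<rho>) (fam p \<rho>)"
| "fam (Min X p) \<rho> = insert (semL (Min X p) \<rho>) (fam p (\<rho>(X := semL (Min X p) \<rho>)))"
| "fam (Max X p) \<rho> = insert (semL (Max X p) \<rho>) (fam p (\<rho>(X := semL (Max X p) \<rho>)))"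
| "fam (Var X) \<rho> = {\<rho> X}"

lemma fam_top: "semL p \<rho> \<in> fam p \<rho>"
  by (cases p) auto

lemma finite_fam: "finite (fam p \<rho>)"
  by (induction p arbitrary: \<rho>) auto

lemma ufv_fv: "ufv p \<subseteq> fv p"
  by (induction p) auto

lemma lemA: "maxHML q \<Longrightarrow> guarded q \<Longrightarrow> (\<forall>X\<in>fv q. \<rho> X \<in> G) \<Longrightarrow>
  (\<forall>X\<in>ufv q. \<forall>a. res a (\<rho> X) \<in> lat G) \<Longrightarrow> res a (semL q \<rho>) \<in> lat (G \<union> fam q \<rho>)"
proof (induction q arbitrary: \<rho> G)
  case TT then show ?case by (simp add: res_def lat.univ)
next
  case FF then show ?case by (simp add: res_def lat.empty)
next
  case (Or p q)
  have "res a (semL p \<rho>) \<in> lat (G \<union> fam p \<rho>)" "res a (semL q \<rho>) \<in> lat (G \<union> fam q \<rho>)"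
    using Or.prems by (intro Or.IH; auto)+
  then have "res a (semL p \<rho>) \<in> lat (G \<union> fam (Or p q) \<rho>)" "res a (semL q \<rho>) \<in> lat (G \<union> fam (Or p q) \<rho>)"
    by (auto elim!: lat_mono')
  moreover have "res a (semL (Or p q) \<rho>) = res a (semL p \<rho>) \<union> res a (semL q \<rho>)" by (auto simp: res_def)
  ultimately show ?case by (simp add: lat.un)
next
  case (And p q)
  have "res a (semL p \<rho>) \<in> lat (G \<union> fam p \<rho>)" "res a (semL q \<rho>) \<in> lat (G \<union> fam q \<rho>)"
    using And.prems by (intro And.IH; auto)+
  then have "res a (semL p \<rho>) \<in> lat (G \<union> fam (And p q) \<rho>)" "res a (semL q \<rho>) \<in> lat (G \<union> fam (And p q) \<rho>)"
    by (auto elim!: lat_mono')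
  moreover have "res a (semL (And p q) \<rho>) = res a (semL p \<rho>) \<inter> res a (semL q \<rho>)" by (auto simp: res_def)
  ultimately show ?case by (simp add: lat.int)
next
  case (Dia A p)
  have "res a (semL (Dia A p) \<rho>) = (if a \<in> A then semL p \<rho> else {})" by (auto simp: res_def)
  moreover have "semL p \<rho> \<in> lat (G \<union> fam (Dia A p) \<rho>)" using fam_top[of p \<rho>] by (auto intro: lat.base)
  ultimately show ?case by (simp add: lat.empty)
next
  case (Box A p)
  have "res a (semL (Box A p) \<rho>) = (if a \<in> A then semL p \<rho> else UNIV)" by (auto simp: res_def)
  moreover have "semL p \<rho> \<in> lat (G \<union> fam (Box A p) \<rho>)" using fam_top[of p \<rho>] by (auto intro: lat.base)
  ultimately show ?case by (simp add: lat.univ)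
next
  case (Min X p) then show ?case by simp
next
  case (Max X p)
  define M where "M = semL (Max X p) \<rho>"
  have M: "M = semL p (\<rho>(X := M))" unfolding M_def by (rule semL_Max_unfold)
  have "res a (semL p (\<rho>(X := M))) \<in> lat (insert M G \<union> fam p (\<rho>(X := M)))"
  proof (rule Max.IH)
    show "\<forall>Y\<in>ufv p. \<forall>a. res a ((\<rho>(X := M)) Y) \<in> lat (insert M G)"
    proof (intro ballI allI)
      fix Y b assume Y: "Y \<in> ufv p"
      then have "Y \<noteq> X" "Y \<in> ufv (Max X p)" using Max.prems by auto
      then have "res b (\<rho> Y) \<in> lat G" using Max.prems by auto
      then show "res b ((\<rho>(X := M)) Y) \<in> lat (insert M G)" using \<open>Y \<noteq> X\<close>
        by (auto elim!: lat_mono')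
    qed
  qed (use Max.prems in auto)
  moreover have "insert M G \<union> fam p (\<rho>(X := M)) \<subseteq> G \<union> fam (Max X p) \<rho>" by (simp add: M_def)
  ultimately show ?case using M unfolding M_def by (auto elim!: lat_mono')
next
  case (Var X) then show ?case by (auto elim!: lat_mono')
qed

lemma lemB: "maxHML q \<Longrightarrow> guarded q \<Longrightarrow> (\<forall>X\<in>fv q. \<rho> X \<in> G \<and> (\<forall>a. res a (\<rho> X) \<in> lat G)) \<Longrightarrow>
  S \<in> fam q \<rho> \<Longrightarrow> res a S \<in> lat (G \<union> fam q \<rho>)"
proof (induction q arbitrary: \<rho> G S)
  case (Or p q)
  show ?case
  proof (cases "S = semL (Or p q) \<rho>")
    case True
    have "res a (semL (Or p q) \<rho>) \<in> lat (G \<union> fam (Or p q) \<rho>)"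
      using Or.prems ufv_fv[of "Or p q"] by (intro lemA) auto
    with True show ?thesis by simp
  next
    case False
    then have "S \<in> fam p \<rho> \<or> S \<in> fam q \<rho>" using Or.prems by auto
    then show ?thesis
    proof
      assume "S \<in> fam p \<rho>"
      then have "res a S \<in> lat (G \<union> fam p \<rho>)" using Or.prems by (intro Or.IH) auto
      then show ?thesis by (auto elim!: lat_mono')
    next
      assume "S \<in> fam q \<rho>"
      then have "res a S \<in> lat (G \<union> fam q \<rho>)" using Or.prems by (intro Or.IH) auto
      then show ?thesis by (auto elim!: lat_mono')
    qed
  qed
next
  case (And p q)
  show ?case
  proof (cases "S = semL (And p q) \<rho>")
    case True
    have "res a (semL (And p q) \<rho>) \<in> lat (G \<union> fam (And p q) \<rho>)"
      using And.prems ufv_fv[of "And p q"] by (intro lemA) auto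
    with True show ?thesis by simp
  next
    case False
    then have "S \<in> fam p \<rho> \<or> S \<in> fam q \<rho>" using And.prems by auto
    then show ?thesis
    proof
      assume "S \<in> fam p \<rho>"
      then have "res a S \<in> lat (G \<union> fam p \<rho>)" using And.prems by (intro And.IH) auto
      then show ?thesis by (auto elim!: lat_mono')
    next
      assume "S \<in> fam q \<rho>"
      then have "res a S \<in> lat (G \<union> fam q \<rho>)" using And.prems by (intro And.IH) auto
      then show ?thesis by (auto elim!: lat_mono')
    qed
  qed
next
  case (Dia A p)
  show ?case
  proof (cases "S = semL (Dia A p) \<rho>")
    case True
    have "res a (semL (Dia A p) \<rho>) \<in> lat (G \<union> fam (Dia A p) \<rho>)"
      using Dia.prems ufv_fv[of "Dia A p"] by (intro lemA) auto
    with True show ?thesis by simp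
  next
    case False
    then have "S \<in> fam p \<rho>" using Dia.prems by auto
    then have "res a S \<in> lat (G \<union> fam p \<rho>)" using Dia.prems by (intro Dia.IH) auto
    then show ?thesis by (auto elim!: lat_mono')
  qed
next
  case (Box A p)
  show ?case
  proof (cases "S = semL (Box A p) \<rho>")
    case True
    have "res a (semL (Box A p) \<rho>) \<in> lat (G \<union> fam (Box A p) \<rho>)"
      using Box.prems ufv_fv[of "Box A p"] by (intro lemA) auto
    with True show ?thesis by simp
  next
    case False
    then have "S \<in> fam p \<rho>" using Box.prems by auto
    then have "res a S \<in> lat (G \<union> fam p \<rho>)" using Box.prems by (intro Box.IH) auto
    then show ?thesis by (auto elim!: lat_mono')
  qed
next
  case (Min X p) then show ?case by simp
next
  case (Max X p)
  define M where "M = semL (Max X p) \<rho>"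
  have resM: "\<forall>a. res a M \<in> lat (G \<union> fam (Max X p) \<rho>)"
    unfolding M_def using Max.prems ufv_fv[of "Max X p"] by (intro allI lemA) auto
  show ?case
  proof (cases "S = M")
    case True then show ?thesis using resM by simp
  next
    case False
    then have S: "S \<in> fam p (\<rho>(X := M))" using Max.prems by (simp add: M_def)
    let ?G = "G \<union> fam (Max X p) \<rho>"
    have "res a S \<in> lat (?G \<union> fam p (\<rho>(X := M)))"
    proof (rule Max.IH)
      show "\<forall>Y\<in>fv p. (\<rho>(X := M)) Y \<in> ?G \<and> (\<forall>a. res a ((\<rho>(X := M)) Y) \<in> lat ?G)"
      proof
        fix Y assume Y: "Y \<in> fv p"
        show "(\<rho>(X := M)) Y \<in> ?G \<and> (\<forall>a. res a ((\<rho>(X := M)) Y) \<in> lat ?G)"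
        proof (cases "Y = X")
          case True then show ?thesis using resM by (simp add: M_def)
        next
          case False
          have h: "\<rho> Y \<in> G" "\<And>b. res b (\<rho> Y) \<in> lat G" using Y False Max.prems by auto
          have sub: "G \<subseteq> ?G" by blast
          have "\<And>b. res b (\<rho> Y) \<in> lat ?G" using lat_mono'[OF h(2) sub] .
          then show ?thesis using False h(1) sub by auto
        qed
      qed
    qed (fact S | use Max.prems in simp)+
    moreover have "?G \<union> fam p (\<rho>(X := M)) = ?G" by (auto simp: M_def)
    ultimately show ?thesis by simp
  qed
next
  case (Var X) then show ?case using lemA[of "Var X" \<rho> G] by simp
qed (auto intro: lat.intros simp: res_def)


fun bigAnd :: "'a hml list \<Rightarrow> 'a hml" where
  "bigAnd [] = TT" | "bigAnd (p # ps) = And p (bigAnd ps)"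

lemma bigAnd_props: "fv (bigAnd ps) = \<Union>(fv ` set ps)" "ufv (bigAnd ps) = \<Union>(ufv ` set ps)"
  "guarded (bigAnd ps) = (\<forall>p\<in>set ps. guarded p)" "sHML (bigAnd ps) = (\<forall>p\<in>set ps. sHML p)"
  "semL (bigAnd ps) \<sigma> = {t. \<forall>p\<in>set ps. t \<in> semL p \<sigma>}"
  by (induction ps) auto

lemma sem_body: "set xs = UNIV \<Longrightarrow>
  semL (bigAnd (map (\<lambda>a. Box {a} (F a)) xs)) \<sigma> = {t. stl t \<in> semL (F (shd t)) \<sigma>}"
  by (auto simp: bigAnd_props)

fun Gf :: "('a stream set \<Rightarrow> nat) \<Rightarrow> 'a list \<Rightarrow> nat \<Rightarrow> 'a stream set set \<Rightarrow> 'a stream set \<Rightarrow> 'a hml" where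
  "Gf ix xs 0 V S = (if S = {} then FF else if S \<in> V then Var (ix S) else TT)"
| "Gf ix xs (Suc k) V S = (if S = {} then FF else if S \<in> V then Var (ix S) else
     Max (ix S) (bigAnd (map (\<lambda>a. Box {a} (Gf ix xs k (insert S V) (res a S))) xs)))"

lemma Gf_syn: "fv (Gf ix xs k V S) \<subseteq> ix ` V \<and> guarded (Gf ix xs k V S) \<and> sHML (Gf ix xs k V S)"
proof (induction k arbitrary: V S)
  case 0 then show ?case by auto
next
  case (Suc k)
  have h: "\<And>a. fv (Gf ix xs k (insert S V) (res a S)) \<subseteq> ix ` insert S V"
    "\<And>a. guarded (Gf ix xs k (insert S V) (res a S))" "\<And>a. sHML (Gf ix xs k (insert S V) (res a S))"
    using Suc.IH by blast+
  show ?case using h by (auto simp: bigAnd_props)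
qed

fun Ap :: "nat \<Rightarrow> 'a stream set \<Rightarrow> 'a stream set" where
  "Ap 0 S = (if S = {} then {} else UNIV)"
| "Ap (Suc m) S = (if S = {} then {} else {t. stl t \<in> Ap m (res (shd t) S)})"

lemma Ap_Suc_sub: "Ap (Suc m) S \<subseteq> Ap m S"
proof (induction m arbitrary: S)
  case 0 then show ?case by auto
next
  case (Suc m)
  show ?case
  proof
    fix t assume "t \<in> Ap (Suc (Suc m)) S"
    then show "t \<in> Ap (Suc m) S" using Suc.IH[of "res (shd t) S"] by (auto split: if_splits)
  qed
qed

lemma Ap_anti: "m' \<le> m \<Longrightarrow> Ap m S \<subseteq> Ap m' S"
proof (induction m)
  case 0 then show ?case by simp
next
  case (Suc m)
  show ?case
  proof (cases "m' = Suc m")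
    case False then have "m' \<le> m" using Suc.prems by simp
    then show ?thesis using Suc.IH Ap_Suc_sub[of m S] by blast
  qed simp
qed

lemma Ap_approx: "t \<in> Ap m S \<Longrightarrow> \<exists>u\<in>S. stake m u = stake m t"
proof (induction m arbitrary: t S)
  case 0 then show ?case by (auto split: if_splits)
next
  case (Suc m)
  then have ne: "S \<noteq> {}" and st: "stl t \<in> Ap m (res (shd t) S)" by (auto split: if_splits)
  obtain u' where u': "u' \<in> res (shd t) S" "stake m u' = stake m (stl t)" using Suc.IH[OF st] by blast
  have "shd t ## u' \<in> S" using u'(1) by (simp add: res_def)
  moreover have "stake (Suc m) (shd t ## u') = stake (Suc m) t" using u'(2) by simp
  ultimately show ?case by blast
qed

lemma Ap_closed: "closedS S \<Longrightarrow> (\<And>m. t \<in> Ap m S) \<Longrightarrow> t \<in> S"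
  unfolding closedS_def cl_def using Ap_approx by blast

locale constr =
  fixes R :: "'a stream set set" and ix :: "'a stream set \<Rightarrow> nat" and xs :: "'a list"
  assumes inj: "inj_on ix R" and xs: "set xs = UNIV" and fin: "finite R"
    and rcl: "\<And>S a. S \<in> R \<Longrightarrow> res a S \<in> R"
begin

lemma card_step: "S \<in> R \<Longrightarrow> S \<notin> V \<Longrightarrow> card (R - V) \<le> Suc k \<Longrightarrow> card (R - insert S V) \<le> k"
proof -
  assume a: "S \<in> R" "S \<notin> V" "card (R - V) \<le> Suc k"
  have "R - insert S V = (R - V) - {S}" by blast
  moreover have "S \<in> R - V" using a by blast
  moreover have "finite (R - V)" using fin by simp
  ultimately show ?thesis using a(3) by (simp add: card_Diff_singleton)
qed

lemma card_zero: "S \<in> R \<Longrightarrow> S \<notin> V \<Longrightarrow> card (R - V) \<le> 0 \<Longrightarrow> False"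
proof -
  assume a: "S \<in> R" "S \<notin> V" "card (R - V) \<le> 0"
  have "S \<in> R - V" using a by blast
  moreover have "finite (R - V)" using fin by simp
  ultimately have "card (R - V) > 0" by (auto simp: card_gt_0_iff)
  then show False using a(3) by simp
qed

lemma lower: "S \<in> R \<Longrightarrow> V \<subseteq> R \<Longrightarrow> card (R - V) \<le> k \<Longrightarrow> (\<forall>T\<in>V. T \<subseteq> \<sigma> (ix T))
  \<Longrightarrow> S \<subseteq> semL (Gf ix xs k V S) \<sigma>"
proof (induction k arbitrary: V S \<sigma>)
  case 0 then show ?case using card_zero by auto
next
  case (Suc k)
  show ?case
  proof (cases "S = {} \<or> S \<in> V")
    case True then show ?thesis using Suc.prems by auto
  next
    case False
    let ?\<sigma> = "\<sigma>(ix S := S)"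
    have IH: "res a S \<subseteq> semL (Gf ix xs k (insert S V) (res a S)) ?\<sigma>" for a
    proof (rule Suc.IH)
      show "res a S \<in> R" using Suc.prems rcl by blast
      show "insert S V \<subseteq> R" using Suc.prems by blast
      show "card (R - insert S V) \<le> k" using Suc.prems False card_step by blast
      show "\<forall>T\<in>insert S V. T \<subseteq> ?\<sigma> (ix T)"
      proof
        fix T assume T: "T \<in> insert S V"
        show "T \<subseteq> ?\<sigma> (ix T)"
        proof (cases "T = S")
          case False
          then have "T \<in> V" using T by simp
          then have "ix T \<noteq> ix S" using False inj Suc.prems by (meson inj_on_contraD subsetD)
          then show ?thesis using \<open>T \<in> V\<close> Suc.prems by simp
        qed simp
      qed
    qed
    have "S \<subseteq> semL (bigAnd (map (\<lambda>a. Box {a} (Gf ix xs k (insert S V) (res a S))) xs)) ?\<sigma>"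
    proof
      fix t assume t: "t \<in> S"
      then have "stl t \<in> res (shd t) S" by (simp add: res_def)
      then show "t \<in> semL (bigAnd (map (\<lambda>a. Box {a} (Gf ix xs k (insert S V) (res a S))) xs)) ?\<sigma>"
        using IH[of "shd t"] by (simp add: sem_body[OF xs]) blast
    qed
    then show ?thesis using False by (auto simp del: bigAnd.simps)
  qed
qed

lemma upper: "S \<in> R \<Longrightarrow> V \<subseteq> R \<Longrightarrow> card (R - V) \<le> k \<Longrightarrow> (\<forall>T\<in>V. \<sigma> (ix T) \<subseteq> Ap m T)
  \<Longrightarrow> semL (Gf ix xs k V S) \<sigma> \<subseteq> Ap m S"
proof (induction k arbitrary: V S \<sigma> m)
  case 0 then show ?case using card_zero by auto
next
  case (Suc k)
  note oIH = Suc.IH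
  note opr = Suc.prems
  show ?case
  proof (cases "S = {} \<or> S \<in> V")
    case True then show ?thesis using Suc.prems by auto
  next
    case False
    let ?B = "bigAnd (map (\<lambda>a. Box {a} (Gf ix xs k (insert S V) (res a S))) xs)"
    have "P \<subseteq> Ap m S" if P: "P \<subseteq> semL ?B (\<sigma>(ix S := P))" for P
    proof -
      let ?\<sigma> = "\<sigma>(ix S := P)"
      have "m' \<le> m \<longrightarrow> P \<subseteq> Ap m' S" for m'
      proof (induction m')
        case 0 then show ?case using False by simp
      next
        case (Suc m')
        show ?case
        proof
          assume sm: "Suc m' \<le> m"
          then have Pm: "P \<subseteq> Ap m' S" using Suc.IH by simp
          have IH: "semL (Gf ix xs k (insert S V) (res a S)) ?\<sigma> \<subseteq> Ap m' (res a S)" for a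
          proof (rule oIH)
            show "res a S \<in> R" using opr rcl by blast
            show "insert S V \<subseteq> R" using opr by blast
            show "card (R - insert S V) \<le> k" using opr False card_step by blast
            show "\<forall>T\<in>insert S V. ?\<sigma> (ix T) \<subseteq> Ap m' T"
            proof
              fix T assume T: "T \<in> insert S V"
              show "?\<sigma> (ix T) \<subseteq> Ap m' T"
              proof (cases "T = S")
                case False
                then have "T \<in> V" using T by simp
                then have "ix T \<noteq> ix S" using False inj opr by (meson inj_on_contraD subsetD)
                moreover have "\<sigma> (ix T) \<subseteq> Ap m T" using \<open>T \<in> V\<close> opr by simp
                moreover have "Ap m T \<subseteq> Ap m' T" using sm by (intro Ap_anti) simp
                ultimately show ?thesis by simp
              qed (use Pm in simp)
            qed
          qed
          show "P \<subseteq> Ap (Suc m') S"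
          proof
            fix t assume "t \<in> P"
            then have "t \<in> semL ?B ?\<sigma>" using P by blast
            then have "stl t \<in> semL (Gf ix xs k (insert S V) (res (shd t) S)) ?\<sigma>"
              by (simp add: sem_body[OF xs])
            then have "stl t \<in> Ap m' (res (shd t) S)" using IH by blast
            then show "t \<in> Ap (Suc m') S" using False by simp
          qed
        qed
      qed
      then show ?thesis by simp
    qed
    then show ?thesis using False by (auto simp del: bigAnd.simps)
  qed
qed

end


lemma max_part:
  fixes \<phi> :: "('a::finite) hml"
  assumes m: "maxHML \<phi>" and g: "guarded \<phi>" and c: "closed \<phi>"
  shows "\<exists>\<psi>. sHML \<psi> \<and> guarded \<psi> \<and> closed \<psi> \<and> semC \<psi> = semC \<phi>"
proof -
  define \<rho>0 where "\<rho>0 = (\<lambda>_::nat. {} :: 'a stream set)"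
  define F where "F = fam \<phi> \<rho>0"
  define R where "R = lat F"
  define L where "L = semC \<phi>"
  have L: "L = semL \<phi> \<rho>0" unfolding L_def semC_def \<rho>0_def ..
  have LR: "L \<in> R" unfolding R_def F_def L by (rule lat.base, rule fam_top)
  have finR: "finite R" unfolding R_def F_def by (intro finite_lat finite_fam)
  have fv0: "fv \<phi> = {}" using c by (simp add: closed_def)
  have rcl: "res a S \<in> R" if "S \<in> R" for S a
    unfolding R_def
  proof (rule lat_res)
    show "S \<in> lat F" using that R_def by simp
    fix S' b assume "S' \<in> F"
    then have "res b S' \<in> lat ({} \<union> fam \<phi> \<rho>0)" unfolding F_def
      using m g fv0 by (intro lemB) auto
    then show "res b S' \<in> lat F" unfolding F_def by simp
  qed
  have clL: "closedS L" unfolding L using m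
    by (rule maxHML_closed) (simp add: \<rho>0_def closedS_def cl_def)
  obtain h where "bij_betw h R {0..<card R}" using ex_bij_betw_finite_nat[OF finR] by blast
  then have inj: "inj_on h R" by (rule bij_betw_imp_inj_on)
  obtain xs :: "'a list" where xs: "set xs = UNIV" using finite_list[of "UNIV :: 'a set"] by auto
  interpret constr R h xs using inj xs finR rcl by unfold_locales auto
  define \<psi> where "\<psi> = Gf h xs (card R) {} L"
  have syn: "fv \<psi> \<subseteq> {} \<and> guarded \<psi> \<and> sHML \<psi>" using Gf_syn[of h xs "card R" "{}" L] unfolding \<psi>_def by simp
  have lo: "L \<subseteq> semL \<psi> \<rho>0" unfolding \<psi>_def using LR by (intro lower) auto
  have up: "semL \<psi> \<rho>0 \<subseteq> Ap m L" for m unfolding \<psi>_def using LR by (intro upper) auto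
  have "semL \<psi> \<rho>0 \<subseteq> L"
  proof
    fix t assume "t \<in> semL \<psi> \<rho>0"
    then have "\<And>m. t \<in> Ap m L" using up by blast
    then show "t \<in> L" using Ap_closed[OF clL] by blast
  qed
  then have "semC \<psi> = semC \<phi>" using lo unfolding semC_def L_def[unfolded semC_def] \<rho>0_def by auto
  then show ?thesis using syn by (auto simp: closed_def)
qed

theorem mainTheorem15:
  fixes \<phi> :: "('a::finite) hml"
  assumes "guarded \<phi>" and "closed \<phi>"
  shows "(maxHML \<phi> \<longrightarrow> (\<exists>\<psi>. sHML \<psi> \<and> guarded \<psi> \<and> closed \<psi> \<and> semC \<psi> = semC \<phi>))
       \<and> (minHML \<phi> \<longrightarrow> (\<exists>\<psi>. cHML \<psi> \<and> guarded \<psi> \<and> closed \<psi> \<and> semC \<psi> = semC \<phi>))"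
proof (intro conjI impI)
  assume "maxHML \<phi>" then show "\<exists>\<psi>. sHML \<psi> \<and> guarded \<psi> \<and> closed \<psi> \<and> semC \<psi> = semC \<phi>"
    using assms max_part by blast
next
  assume mn: "minHML \<phi>"
  have "maxHML (dual \<phi>)" "guarded (dual \<phi>)" "closed (dual \<phi>)"
    using mn assms by (auto simp: dual_props closed_def)
  then obtain \<psi> where \<psi>: "sHML \<psi>" "guarded \<psi>" "closed \<psi>" "semC \<psi> = semC (dual \<phi>)"
    using max_part by blast
  have compl: "semC (dual p) = - semL p (\<lambda>_. UNIV)" for p :: "'a hml"
  proof -
    have "semL (dual p) (\<lambda>X. - (\<lambda>_. UNIV) X) = - semL p (\<lambda>_. UNIV)" by (rule semL_dual)
    then show ?thesis unfolding semC_def by simp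
  qed
  have env: "closed p \<Longrightarrow> semL p (\<lambda>_. UNIV) = semC p" for p :: "'a hml"
    unfolding semC_def closed_def by (intro semL_env) auto
  have "semC (dual \<psi>) = semC \<phi>"
    using compl[of \<psi>] compl[of \<phi>] env[of \<psi>] env[of \<phi>] \<psi>(3,4) assms(2) by simp
  moreover have "cHML (dual \<psi>)" "guarded (dual \<psi>)" "closed (dual \<psi>)"
    using \<psi> by (auto simp: dual_props closed_def)
  ultimately show "\<exists>\<psi>. cHML \<psi> \<and> guarded \<psi> \<and> closed \<psi> \<and> semC \<psi> = semC \<phi>" by blast
qed

end
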